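(* In the single-item all-pay auction with budgets described in the context, given the profile $(B_1,B_2,v_1,v_2)$, if a Nash equilibrium $(F_1,F_2)$ exists, then: Case (1): if $B_1=B_2$ and $B_2<\frac12\min\{v_1,v_2\}$, then $\underline{x}_i=\overline{x}_i$ for every $i\in\{1,2\}$; Case (2): if $B_1=B_2$ and $B_1=\frac12\min\{v_1,v_2\}$, then, letting $i=\arg\min_{i'\in\{1,2\}}v_{i'}$, either $\underline{x}_i=\overline{x}_i$ and $\underline{x}_{-i}=\overline{x}_{-i}$, or $\underline{x}_i=0$ and $\underline{x}_{-i}=\overline{x}_{-i}$; Case (3): if $B_1\neq B_2$, then $\underline{x}_1=\underline{x}_2=0$.
   Context: Single-item all-pay auction with budgets. There are two players $i\in\{1,2\}$; $-i$ denotes the opponent of $i$. Player $i$ has budget $B_i\ge 0$ and valuation $v_i>0$ for a single item. A pure strategy of player $i$ is a bid $x_i\in[0,B_i]$; a mixed strategy is a probability distribution on $[0,B_i]$, described by its cumulative distribution function $F_i$. The player with the higher bid wins the item. Tie-breaking: if $x_1=x_2=\min\{B_1,B_2,v_1,v_2\}$ and $\min\{B_i,v_i\}>\min\{B_{-i},v_{-i}\}$ for some $i$, then player $i$ wins; in all other ties each player wins with probability $\frac12$. Player $i$'s utility is $v_i-x_i$ if he wins and $-x_i$ if he loses. A Nash equilibrium is a pair $(F_1,F_2)$ such that each $F_i$ maximizes player $i$'s expected utility against $F_{-i}$ over all mixed strategies on $[0,B_i]$. $Supp(F_i)$ is the support of $F_i$, $\overline{x}_i=\sup Supp(F_i)$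 and $\underline{x}_i=\inf Supp(F_i)$. *)

theory Defs
  imports "HOL-Probability.Probability"
begin

text \<open>Players are indexed by the naturals 1 and 2; the opponent of i is 3 - i.
  A profile is given by budgets B and valuations v, both functions nat => real.\<close>

definition opp :: "nat \<Rightarrow> nat" where
  "opp i = 3 - i"

text \<open>Probability that player i wins the item when bidding x against an opponent bid y,
  including the tie-breaking rule of the paper.\<close>
definition win_prob :: "(nat \<Rightarrow> real) \<Rightarrow> (nat \<Rightarrow> real) \<Rightarrow> nat \<Rightarrow> real \<Rightarrow> real \<Rightarrow> real" where
  "win_prob B v i x y =
    (if x > y then 1
     else if x < y then 0
     else if x = min (min (B 1) (B 2)) (min (v 1) (v 2))
             \<and> min (B i) (v i) > min (B (opp i)) (v (opp i)) then 1
     else if x = min (min (B 1) (B 2)) (min (v 1) (v 2))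
             \<and> min (B (opp i)) (v (opp i)) > min (B i) (v i) then 0
     else 1/2)"

definition util :: "(nat \<Rightarrow> real) \<Rightarrow> (nat \<Rightarrow> real) \<Rightarrow> nat \<Rightarrow> real \<Rightarrow> real \<Rightarrow> real" where
  "util B v i x y = v i * win_prob B v i x y - x"

definition mixed_strategy :: "real \<Rightarrow> real measure \<Rightarrow> bool" where
  "mixed_strategy b M \<longleftrightarrow> prob_space M \<and> sets M = sets borel \<and> measure M {0..b} = 1"

definition exp_util :: "(nat \<Rightarrow> real) \<Rightarrow> (nat \<Rightarrow> real) \<Rightarrow> nat \<Rightarrow> real measure \<Rightarrow> real measure \<Rightarrow> real" where
  "exp_util B v i M N = (\<integral>p. util B v i (fst p) (snd p) \<partial>(M \<Otimes>\<^sub>M N))"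

definition nash :: "(nat \<Rightarrow> real) \<Rightarrow> (nat \<Rightarrow> real) \<Rightarrow> (nat \<Rightarrow> real measure) \<Rightarrow> bool" where
  "nash B v F \<longleftrightarrow>
     (\<forall>i\<in>{1,2}. mixed_strategy (B i) (F i)) \<and>
     (\<forall>i\<in>{1,2}. \<forall>G. mixed_strategy (B i) G \<longrightarrow>
         exp_util B v i G (F (opp i)) \<le> exp_util B v i (F i) (F (opp i)))"

definition Supp :: "real measure \<Rightarrow> real set" where
  "Supp M = {x. \<forall>e>0. measure M (ball x e) > 0}"

definition sup_supp :: "real measure \<Rightarrow> real" where
  "sup_supp M = Sup (Supp M)"

definition inf_supp :: "real measure \<Rightarrow> real" where
  "inf_supp M = Inf (Supp M)"

end

theory Submission
  imports Defs
begin

lemma util_meas_borel: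
  "(\<lambda>p::real\<times>real. util B v k (fst p) (snd p)) \<in> borel_measurable (borel \<Otimes>\<^sub>M borel)"
  unfolding util_def win_prob_def by measurable

lemma util_meas:
  assumes "sets M = sets (borel::real measure)" "sets N = sets (borel::real measure)"
  shows "(\<lambda>p. util B v k (fst p) (snd p)) \<in> borel_measurable (M \<Otimes>\<^sub>M N)"
proof -
  have "sets (M \<Otimes>\<^sub>M N) = sets (borel \<Otimes>\<^sub>M (borel::real measure))"
    using assms by (intro sets_pair_measure_cong) auto
  then show ?thesis using util_meas_borel measurable_cong_sets by blast
qed

definition Ucl :: "(nat \<Rightarrow> real) \<Rightarrow> (nat \<Rightarrow> real) \<Rightarrow> nat \<Rightarrow> real measure \<Rightarrow> real \<Rightarrow> real" where
  "Ucl B v k N x = v k * (measure N {..<x} + win_prob B v k x x * measure N {x}) - x"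

lemma util_split:
  "util B v k x y = v k * (indicator {..<x} y + win_prob B v k x x * indicator {x} y) - x"
  unfolding util_def by (cases "y < x"; cases "y = x") (auto simp: win_prob_def indicator_def)

lemma util_integral:
  assumes "prob_space N" "sets N = sets (borel::real measure)"
  shows "(\<integral>y. util B v k x y \<partial>N) = Ucl B v k N x"
proof -
  interpret prob_space N by fact
  have m: "{..<x} \<in> sets N" "{x} \<in> sets N" using assms(2) by auto
  have "(\<integral>y. util B v k x y \<partial>N) = (\<integral>y. v k * (indicator {..<x} y + win_prob B v k x x * indicator {x} y) - x \<partial>N)"
    by (simp add: util_split)
  also have "\<dots> = Ucl B v k N x"
  proof -
    have sp: "space N = UNIV" using assms(2) sets_eq_imp_space_eq by fastforce
    have i1: "integrable N (indicator {..<x} :: real \<Rightarrow> real)" "integrable N (indicator {x} :: real \<Rightarrow> real)"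
      using m by (auto intro!: integrable_real_indicator simp: less_top[symmetric])
    have i2: "integrable N (\<lambda>y. v k * (indicator {..<x} y + win_prob B v k x x * indicator {x} y))"
      using i1 by auto
    have "(\<integral>y. v k * (indicator {..<x} y + win_prob B v k x x * indicator {x} y) - x \<partial>N)
       = (\<integral>y. v k * (indicator {..<x} y + win_prob B v k x x * indicator {x} y) \<partial>N) - x"
      by (subst Bochner_Integration.integral_diff[OF i2]) (auto simp: prob_space)
    also have "(\<integral>y. v k * (indicator {..<x} y + win_prob B v k x x * indicator {x} y) \<partial>N)
       = v k * ((\<integral>y. indicator {..<x} y \<partial>N) + win_prob B v k x x * (\<integral>y. indicator {x} y \<partial>N))"
      using i1 by (simp add: integral_add)
    finally show ?thesis by (simp add: Ucl_def sp)
  qed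
  finally show ?thesis .
qed

lemma ms_AE:
  assumes "mixed_strategy b M" shows "AE x in M. x \<in> {0..b}"
proof -
  interpret prob_space M using assms by (simp add: mixed_strategy_def)
  show ?thesis using assms by (intro AE_prob_1) (simp add: mixed_strategy_def)
qed

lemma ms_integrable:
  fixes g :: "real \<Rightarrow> real"
  assumes "mixed_strategy b M" "g \<in> borel_measurable borel" "\<And>x. x \<in> {0..b} \<Longrightarrow> \<bar>g x\<bar> \<le> K"
  shows "integrable M g"
proof -
  interpret prob_space M using assms by (simp add: mixed_strategy_def)
  have s: "sets M = sets borel" using assms by (simp add: mixed_strategy_def)
  show ?thesis
  proof (rule Bochner_Integration.integrable_bound[of M "\<lambda>_. K" g])
    show "integrable M (\<lambda>_. K)" by simp
    show "g \<in> borel_measurable M" using measurable_cong_sets[OF s refl] assms(2) by blast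
    show "AE x in M. norm (g x) \<le> norm K"
      using ms_AE[OF assms(1)] by eventually_elim (use assms(3) in fastforce)
  qed
qed

lemma Ucl_meas:
  assumes "prob_space N" "sets N = sets (borel::real measure)"
  shows "Ucl B v k N \<in> borel_measurable borel"
proof -
  interpret sigma_finite_measure N using assms(1) prob_space_imp_sigma_finite by blast
  have "(\<lambda>(x,y). util B v k x y) \<in> borel_measurable (borel \<Otimes>\<^sub>M N)"
    using util_meas[of borel N] assms(2) by (simp add: case_prod_beta')
  then have "(\<lambda>x. \<integral>y. util B v k x y \<partial>N) \<in> borel_measurable borel"
    by (rule borel_measurable_lebesgue_integral)
  moreover have "(\<lambda>x. \<integral>y. util B v k x y \<partial>N) = Ucl B v k N"
    using util_integral[OF assms] by auto
  ultimately show ?thesis by simp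
qed

lemma ms_prob: "mixed_strategy b M \<Longrightarrow> prob_space M" by (simp add: mixed_strategy_def)
lemma ms_sets: "mixed_strategy b M \<Longrightarrow> sets M = sets borel" by (simp add: mixed_strategy_def)

lemma exp_util_eq:
  assumes M: "mixed_strategy b M" and N: "mixed_strategy b' N" and vk: "v k \<ge> 0"
  shows "exp_util B v k M N = (\<integral>x. Ucl B v k N x \<partial>M)"
proof -
  interpret pair_prob_space M N
    using ms_prob[OF M] ms_prob[OF N]
    by (simp add: pair_prob_space_def pair_sigma_finite_def prob_space_imp_sigma_finite)
  have meas: "(\<lambda>p. util B v k (fst p) (snd p)) \<in> borel_measurable (M \<Otimes>\<^sub>M N)"
    using util_meas ms_sets[OF M] ms_sets[OF N] by blast
  have bnd: "\<bar>util B v k x y\<bar> \<le> v k + b" if "x \<in> {0..b}" for x y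
  proof -
    have "0 \<le> win_prob B v k x y" "win_prob B v k x y \<le> 1" unfolding win_prob_def by auto
    then have "0 \<le> v k * win_prob B v k x y" "v k * win_prob B v k x y \<le> v k"
      using vk by (auto intro: mult_left_le)
    then show ?thesis using that unfolding util_def by auto
  qed
  have ae1: "AE x in M. AE y in N. \<bar>util B v k (fst (x,y)) (snd (x,y))\<bar> \<le> v k + b"
    using ms_AE[OF M] by eventually_elim (use bnd in auto)
  have ae: "AE p in M \<Otimes>\<^sub>M N. \<bar>util B v k (fst p) (snd p)\<bar> \<le> v k + b"
    by (rule AE_pair_measure[OF _ ae1]) (use meas in measurable)
  have int: "integrable (M \<Otimes>\<^sub>M N) (\<lambda>p. util B v k (fst p) (snd p))"
    by (rule Bochner_Integration.integrable_bound[of "M \<Otimes>\<^sub>M N" "\<lambda>_. v k + b"])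
       (use meas ae in auto)
  have "exp_util B v k M N = (\<integral>x. (\<integral>y. util B v k (fst (x,y)) (snd (x,y)) \<partial>N) \<partial>M)"
    unfolding exp_util_def using integral_fst'[OF int] by simp
  also have "\<dots> = (\<integral>x. Ucl B v k N x \<partial>M)"
    using util_integral[OF ms_prob[OF N] ms_sets[OF N]] by simp
  finally show ?thesis .
qed

lemma ms_return: "x \<in> {0..b} \<Longrightarrow> mixed_strategy b (return borel x)"
  unfolding mixed_strategy_def by (auto intro!: prob_space_return simp: measure_return)

lemma opp_simps[simp]: "opp 1 = 2" "opp 2 = 1" by (simp_all add: opp_def)

lemma Ucl_bound:
  assumes "prob_space N" "x \<in> {0..b}" "v k \<ge> 0"
  shows "\<bar>Ucl B v k N x\<bar> \<le> 2 * v k + b"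
proof -
  interpret prob_space N by fact
  have "0 \<le> win_prob B v k x x" "win_prob B v k x x \<le> 1" unfolding win_prob_def by auto
  moreover have "0 \<le> measure N {x}" "measure N {x} \<le> 1" "0 \<le> measure N {..<x}" "measure N {..<x} \<le> 1"
    by auto
  ultimately have "0 \<le> win_prob B v k x x * measure N {x}" "win_prob B v k x x * measure N {x} \<le> 1"
    by (auto intro: mult_le_one)
  then have a: "0 \<le> measure N {..<x} + win_prob B v k x x * measure N {x}"
     "measure N {..<x} + win_prob B v k x x * measure N {x} \<le> 2"
    using \<open>measure N {..<x} \<le> 1\<close> \<open>0 \<le> measure N {..<x}\<close> by linarith+
  then have "0 \<le> v k * (measure N {..<x} + win_prob B v k x x * measure N {x})"
     "v k * (measure N {..<x} + win_prob B v k x x * measure N {x}) \<le> v k * 2"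
    using assms(3) by (auto intro: mult_left_mono)
  then show ?thesis using assms(2) unfolding Ucl_def by auto
qed

locale eqm =
  fixes B v :: "nat \<Rightarrow> real" and F :: "nat \<Rightarrow> real measure"
  assumes budgets: "\<forall>i\<in>{1,2}. B i \<ge> 0"
    and vals: "\<forall>i\<in>{1,2}. v i > 0"
    and eq: "nash B v F"
begin

definition u where "u k = exp_util B v k (F k) (F (opp k))"

lemma ms: "k \<in> {1,2} \<Longrightarrow> mixed_strategy (B k) (F k)"
  using eq unfolding nash_def by blast

lemma prob: "k \<in> {1,2} \<Longrightarrow> prob_space (F k)" using ms ms_prob by blast
lemma sets: "k \<in> {1,2} \<Longrightarrow> sets (F k) = sets borel" using ms ms_sets by blast
lemma sets_in[measurable]: "k \<in> {1,2} \<Longrightarrow> S \<in> sets borel \<Longrightarrow> S \<in> sets (F k)" using sets by blast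

lemma oppin: "k \<in> {1,2} \<Longrightarrow> opp k \<in> {1,2}" by (auto simp: opp_def)

lemma eqA:
  assumes k: "k \<in> {1,2}" and x: "x \<in> {0..B k}"
  shows "Ucl B v k (F (opp k)) x \<le> u k"
proof -
  have ms': "mixed_strategy (B k) (return borel x)" using ms_return[OF x] .
  have "exp_util B v k (return borel x) (F (opp k)) \<le> u k"
    using eq ms' k unfolding nash_def u_def by blast
  moreover have "exp_util B v k (return borel x) (F (opp k)) = Ucl B v k (F (opp k)) x"
    using exp_util_eq[where v=v and k=k, OF ms' ms[OF oppin[OF k]]] vals k
      integral_return[of x borel "Ucl B v k (F (opp k))"]
      Ucl_meas[OF prob[OF oppin[OF k]] sets[OF oppin[OF k]]] by auto
  ultimately show ?thesis by simp
qed

lemma eqB: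
  assumes k: "k \<in> {1,2}" and pos: "measure (F k) S > 0"
  shows "\<exists>x\<in>S \<inter> {0..B k}. Ucl B v k (F (opp k)) x \<ge> u k"
proof (rule ccontr)
  assume neg: "\<not> ?thesis"
  let ?U = "Ucl B v k (F (opp k))"
  have S: "S \<in> sets (F k)" using pos measure_notin_sets[of S "F k"] by fastforce
  have l: "opp k \<in> {1,2}" using oppin[OF k] .
  have vk: "v k \<ge> 0" using vals k by auto
  have Um: "?U \<in> borel_measurable borel" using Ucl_meas[OF prob[OF l] sets[OF l]] .
  have intU: "integrable (F k) ?U"
    by (rule ms_integrable[OF ms[OF k] Um]) (use Ucl_bound[OF prob[OF l]] vk in blast)
  interpret prob_space "F k" using prob[OF k] .
  have ueq: "u k = (\<integral>x. ?U x \<partial>F k)"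
    unfolding u_def using exp_util_eq[where v=v and k=k, OF ms[OF k] ms[OF l] vk] .
  have int2: "integrable (F k) (\<lambda>x. u k - ?U x)" using intU by auto
  have "(\<integral>x. u k - ?U x \<partial>F k) = 0"
    using ueq by (simp add: Bochner_Integration.integral_diff[OF _ intU] prob_space)
  moreover have "AE x in F k. 0 \<le> u k - ?U x"
    using ms_AE[OF ms[OF k]] by eventually_elim (use eqA[OF k] in auto)
  ultimately have ae0: "AE x in F k. u k - ?U x = 0"
    using integral_nonneg_eq_0_iff_AE[OF int2] by blast
  have aeS: "AE x in F k. x \<notin> S"
    using ae0 ms_AE[OF ms[OF k]] by eventually_elim (use neg in force)
  have "space (F k) = UNIV" using sets_eq_imp_space_eq[OF sets[OF k]] by simp
  then have ss: "{x\<in>space (F k). \<not> x \<notin> S} = S" by auto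
  have "emeasure (F k) S = 0"
    using AE_iff_measurable[OF S ss] aeS by simp
  then show False using pos by (simp add: measure_def)
qed

end

lemma ms_space: "mixed_strategy b M \<Longrightarrow> space M = UNIV"
  using sets_eq_imp_space_eq[OF ms_sets] by fastforce

lemma ms_restrict:
  assumes M: "mixed_strategy b M" and A: "A \<in> sets borel"
  shows "measure M A = measure M (A \<inter> {0..b})"
proof -
  have s: "sets M = sets borel" using ms_sets[OF M] .
  show ?thesis
    by (rule measure_eq_AE) (use ms_AE[OF M] A s in auto)
qed

lemma ms_outside:
  assumes M: "mixed_strategy b M" and A: "A \<in> sets borel" "A \<inter> {0..b} = {}"
  shows "measure M A = 0"
  using ms_restrict[OF M A(1)] A(2) by simp

lemma inf_supp_eq:
  assumes M: "mixed_strategy b M" and c0: "measure M {..<c} = 0"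
    and cpos: "\<forall>e>0. measure M {..<c+e} > 0"
  shows "inf_supp M = c"
proof -
  interpret prob_space M using ms_prob[OF M] .
  have s: "sets M = sets borel" using ms_sets[OF M] .
  have cS: "c \<in> Supp M"
    unfolding Supp_def
  proof (intro CollectI allI impI)
    fix e :: real assume e: "e > 0"
    have "measure M {..<c+e} = measure M ({..<c} \<union> {c..<c+e})"
      using e by (intro arg_cong[where f="measure M"]) auto
    also have "\<dots> = measure M {..<c} + measure M {c..<c+e}"
      by (rule finite_measure_Union) (use s in auto)
    finally have "measure M {c..<c+e} > 0" using cpos e c0 by auto
    also have "measure M {c..<c+e} \<le> measure M (ball c e)"
      by (rule finite_measure_mono) (use s in \<open>auto simp: dist_real_def\<close>)
    finally show "measure M (ball c e) > 0" .
  qed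
  have lb: "c \<le> x" if "x \<in> Supp M" for x
  proof (rule ccontr)
    assume "\<not> c \<le> x"
    then have "c - x > 0" by simp
    with that have "measure M (ball x (c - x)) > 0" unfolding Supp_def by blast
    moreover have "measure M (ball x (c - x)) \<le> measure M {..<c}"
      by (rule finite_measure_mono) (use s in \<open>auto simp: dist_real_def\<close>)
    ultimately show False using c0 by simp
  qed
  show ?thesis unfolding inf_supp_def
    by (rule cInf_eq_minimum[OF cS lb])
qed

lemma point_mass:
  assumes M: "mixed_strategy b M" and c1: "measure M {c} = 1"
  shows "inf_supp M = c" "sup_supp M = c"
proof -
  interpret prob_space M using ms_prob[OF M] .
  have s: "sets M = sets borel" using ms_sets[OF M] .
  have "Supp M = {c}"
  proof (intro set_eqI iffI)
    fix x assume x: "x \<in> Supp M"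
    show "x \<in> {c}"
    proof (rule ccontr)
      assume "x \<notin> {c}"
      then have d: "dist x c > 0" by simp
      with x have "measure M (ball x (dist x c)) > 0" unfolding Supp_def by blast
      moreover have "measure M (ball x (dist x c)) \<le> measure M (UNIV - {c})"
        by (rule finite_measure_mono) (use s in auto)
      moreover have "measure M (UNIV - {c}) = 0"
        using prob_compl[of "{c}"] c1 s ms_space[OF M] by auto
      ultimately show False by simp
    qed
  next
    fix x assume "x \<in> {c}"
    then show "x \<in> Supp M" unfolding Supp_def
    proof (intro CollectI allI impI)
      fix e :: real assume "e > 0"
      have "measure M {c} \<le> measure M (ball c e)"
        by (rule finite_measure_mono) (use s \<open>e > 0\<close> in auto)
      then show "measure M (ball x e) > 0" using c1 \<open>x \<in> {c}\<close> by auto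
    qed
  qed
  then show "inf_supp M = c" "sup_supp M = c" unfolding inf_supp_def sup_supp_def by auto
qed



lemma inf_exists:
  assumes M: "mixed_strategy b M"
  shows "\<exists>c\<in>{0..b}. measure M {..<c} = 0 \<and> (\<forall>e>0. measure M {..<c+e} > 0)"
proof -
  interpret prob_space M using ms_prob[OF M] .
  have s: "sets M = sets borel" using ms_sets[OF M] .
  define S where "S = {t. measure M {..<t} = 0}"
  have mono: "measure M {..<t} \<le> measure M {..<t'}" if "t \<le> t'" for t t'
    by (rule finite_measure_mono) (use s that in auto)
  have "{..<0::real} \<inter> {0..b} = {}" by auto
  then have 0: "0 \<in> S" unfolding S_def using ms_outside[OF M, of "{..<0}"] by auto
  have ub: "t \<le> b" if "t \<in> S" for t
  proof (rule ccontr)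
    assume "\<not> t \<le> b"
    then have "measure M {0..b} \<le> measure M {..<t}"
      by (intro finite_measure_mono) (use s in auto)
    moreover have "measure M {..<t} = 0" using that unfolding S_def by blast
    moreover have "measure M {0..b} = 1" using M unfolding mixed_strategy_def by blast
    ultimately show False by linarith
  qed
  define c where "c = Sup S"
  have bdd: "bdd_above S" using ub by (auto simp: bdd_above_def)
  have c0: "0 \<le> c" unfolding c_def using cSup_upper[OF 0 bdd] .
  have cb: "c \<le> b" unfolding c_def using cSup_least[of S b] 0 ub by auto
  have below: "measure M {..<t} = 0" if tc: "t < c" for t
  proof -
    obtain s' where "s' \<in> S" "t < s'" using less_cSupD[of S t] 0 tc[unfolded c_def] by auto
    then have "measure M {..<t} \<le> 0" using mono[of t s'] unfolding S_def by auto
    then show ?thesis using measure_nonneg[of M "{..<t}"] by linarith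
  qed
  define A where "A n = {..<c - 1 / Suc n}" for n :: nat
  have inc: "incseq A"
  proof (rule incseq_SucI)
    fix n
    have "1 / real (Suc (Suc n)) \<le> 1 / real (Suc n)"
      by (rule divide_left_mono) auto
    then show "A n \<subseteq> A (Suc n)" unfolding A_def by auto
  qed
  have lim: "(\<lambda>n. measure M (A n)) \<longlonglongrightarrow> measure M (\<Union>n. A n)"
  proof (rule finite_Lim_measure_incseq[OF _ inc])
    show "range A \<subseteq> sets M" unfolding A_def s by auto
  qed
  have z: "measure M (A n) = 0" for n
  proof -
    have "(0::real) < 1 / real (Suc n)" by simp
    then show ?thesis unfolding A_def by (intro below) linarith
  qed
  have U: "(\<Union>n. A n) = {..<c}"
  proof (intro set_eqI iffI)
    fix x assume "x \<in> {..<c}"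
    then have "c - x > 0" by simp
    then obtain n where n: "inverse (real (Suc n)) < c - x" using reals_Archimedean by blast
    then have "x < c - 1 / Suc n" by (simp add: inverse_eq_divide)
    then show "x \<in> (\<Union>n. A n)" unfolding A_def by blast
  next
    fix x assume "x \<in> (\<Union>n. A n)"
    then obtain n where "x < c - 1 / Suc n" unfolding A_def by blast
    moreover have "(0::real) < 1 / real (Suc n)" by simp
    ultimately have "x < c" by linarith
    then show "x \<in> {..<c}" by simp
  qed
  have "(\<lambda>n. measure M (A n)) \<longlonglongrightarrow> 0" using z by simp
  then have "measure M {..<c} = 0" using LIMSEQ_unique[OF lim] U by simp
  moreover have "measure M {..<c+e} > 0" if "e > 0" for e
  proof (rule ccontr)
    assume "\<not> ?thesis"
    then have "c + e \<in> S" unfolding S_def using measure_nonneg[of M "{..<c+e}"] by simp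
    then have "c + e \<le> c" unfolding c_def using cSup_upper[OF _ bdd] by blast
    then show False using that by simp
  qed
  ultimately show ?thesis using c0 cb by auto
qed



lemma right_cont:
  assumes M: "mixed_strategy b M" and eta: "\<eta> > 0"
  shows "\<exists>d>0. measure M {c..c+d} < measure M {c} + \<eta>"
proof -
  interpret prob_space M using ms_prob[OF M] .
  have s: "sets M = sets borel" using ms_sets[OF M] .
  define A where "A n = {c..c + 1 / Suc n}" for n :: nat
  have "(\<lambda>n. measure M (A n)) \<longlonglongrightarrow> measure M (\<Inter>n. A n)"
  proof (rule finite_Lim_measure_decseq)
    show "range A \<subseteq> sets M" unfolding A_def s by auto
    show "decseq A"
    proof (rule decseq_SucI)
      fix n
      have "1 / real (Suc (Suc n)) \<le> 1 / real (Suc n)"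
        by (rule divide_left_mono) auto
      then show "A (Suc n) \<subseteq> A n" unfolding A_def by auto
    qed
  qed
  moreover have "(\<Inter>n. A n) = {c}"
  proof (intro set_eqI iffI)
    fix x assume x: "x \<in> (\<Inter>n. A n)"
    show "x \<in> {c}"
    proof (rule ccontr)
      assume "x \<notin> {c}"
      moreover from x have "x \<in> A 0" by blast
      ultimately have "x - c > 0" unfolding A_def by auto
      then obtain n where n: "inverse (real (Suc n)) < x - c" using reals_Archimedean by blast
      from x have "x \<in> A n" by blast
      then have "x \<le> c + 1 / Suc n" unfolding A_def by auto
      with n show False by (simp add: inverse_eq_divide)
    qed
  next
    fix x assume "x \<in> {c}"
    then show "x \<in> (\<Inter>n. A n)" unfolding A_def by auto
  qed
  ultimately have "(\<lambda>n. measure M (A n)) \<longlonglongrightarrow> measure M {c}" by simp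
  then obtain n where "\<bar>measure M (A n) - measure M {c}\<bar> < \<eta>"
    using eta unfolding LIMSEQ_def dist_real_def by blast
  then show ?thesis unfolding A_def by (intro exI[of _ "1 / Suc n"]) auto
qed

lemma opp_opp: "k \<in> {1,2} \<Longrightarrow> opp (opp k) = k" by (auto simp: opp_def)

lemma wp_vals: "win_prob B v k x x = 0 \<or> win_prob B v k x x = 1/2 \<or> win_prob B v k x x = 1"
  unfolding win_prob_def by auto

lemma wp_one:
  assumes "k \<in> {1,2}" "win_prob B v k x x = 1"
  shows "win_prob B v (opp k) x x = 0"
proof -
  have oo: "opp (opp k) = k" using opp_opp[OF assms(1)] .
  from assms(2) have "x = min (min (B 1) (B 2)) (min (v 1) (v 2)) \<and>
      min (B k) (v k) > min (B (opp k)) (v (opp k))"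
    unfolding win_prob_def by (simp split: if_splits)
  then show ?thesis unfolding win_prob_def oo by auto
qed

lemma wp_half:
  assumes "x \<noteq> min (min (B 1) (B 2)) (min (v 1) (v 2)) \<or> min (B k) (v k) = min (B (opp k)) (v (opp k))"
  shows "win_prob B v k x x = 1/2"
  using assms unfolding win_prob_def by auto

context eqm
begin

lemma mnn: "0 \<le> measure (F k) A" by (rule measure_nonneg)

lemma fm: "k \<in> {1,2} \<Longrightarrow> finite_measure (F k)"
  by (rule prob_space.finite_measure[OF prob])

lemma mle1: "k \<in> {1,2} \<Longrightarrow> measure (F k) A \<le> 1"
  by (rule prob_space.prob_le_1[OF prob])

lemma mmono: "k \<in> {1,2} \<Longrightarrow> A \<subseteq> C \<Longrightarrow> C \<in> sets borel \<Longrightarrow> measure (F k) A \<le> measure (F k) C"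
  by (rule finite_measure.finite_measure_mono[OF fm]) (auto simp only: sets_in)

lemma munion: "k \<in> {1,2} \<Longrightarrow> A \<in> sets borel \<Longrightarrow> C \<in> sets borel \<Longrightarrow> A \<inter> C = {} \<Longrightarrow>
   measure (F k) (A \<union> C) = measure (F k) A + measure (F k) C"
  by (rule finite_measure.finite_measure_Union[OF fm]) (auto simp only: sets_in)

lemma msub: "k \<in> {1,2} \<Longrightarrow> A \<in> sets borel \<Longrightarrow> C \<in> sets borel \<Longrightarrow>
   measure (F k) (A \<union> C) \<le> measure (F k) A + measure (F k) C"
proof -
  assume k: "k \<in> {1,2}" and AC: "A \<in> sets borel" "C \<in> sets borel"
  show ?thesis
    by (rule measure_subadditive) (use AC sets_in[OF k] finite_measure.emeasure_finite[OF fm[OF k]] in auto)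
qed

lemma atMost_split: "k \<in> {1,2} \<Longrightarrow> measure (F k) {..x} = measure (F k) {..<x} + measure (F k) {x}"
proof -
  assume k: "k \<in> {1,2}"
  have "{..x} = {..<x} \<union> {x}" by auto
  then show ?thesis using munion[OF k, of "{..<x}" "{x}"] by simp
qed

lemma Ucl_ge: "n \<in> {1,2} \<Longrightarrow> k \<in> {1,2} \<Longrightarrow> Ucl B v k (F n) x \<ge> v k * measure (F n) {..<x} - x"
proof -
  assume n: "n \<in> {1,2}" and k: "k \<in> {1,2}"
  have "0 \<le> win_prob B v k x x" unfolding win_prob_def by auto
  then have "0 \<le> win_prob B v k x x * measure (F n) {x}" using mnn by simp
  moreover have "0 \<le> v k" using vals k by auto
  ultimately have "0 \<le> v k * (win_prob B v k x x * measure (F n) {x})" by simp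
  then show ?thesis unfolding Ucl_def distrib_left by linarith
qed

lemma Ucl_le: "n \<in> {1,2} \<Longrightarrow> k \<in> {1,2} \<Longrightarrow> Ucl B v k (F n) x \<le> v k * measure (F n) {..x} - x"
proof -
  assume n: "n \<in> {1,2}" and k: "k \<in> {1,2}"
  have "win_prob B v k x x \<le> 1" unfolding win_prob_def by auto
  then have "win_prob B v k x x * measure (F n) {x} \<le> measure (F n) {x}"
    using mult_right_mono[OF \<open>win_prob B v k x x \<le> 1\<close> mnn[of n "{x}"]] by simp
  moreover have "0 \<le> v k" using vals k by auto
  ultimately have "v k * (win_prob B v k x x * measure (F n) {x}) \<le> v k * measure (F n) {x}"
    by (rule mult_left_mono)
  then show ?thesis unfolding Ucl_def atMost_split[OF n] distrib_left by linarith
qed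

end

context eqm
begin

lemma lt_split:
  assumes k: "k \<in> {1,2}" and ab: "a \<le> b"
  shows "measure (F k) {..<b} = measure (F k) {..<a} + measure (F k) {a..<b}"
proof -
  have e: "{..<b} = {..<a} \<union> {a..<b}" using ab by auto
  have d: "{..<a} \<inter> {a..<b} = {}" by auto
  show ?thesis unfolding e using munion[OF k _ _ d] by simp
qed

lemma lemX:
  assumes k: "k \<in> {1,2}" and cpos: "c > 0" and c0: "measure (F k) {..<c} = 0"
    and cp: "\<forall>e>0. measure (F k) {..<c+e} > 0"
  shows "B 1 = c \<and> B 2 = c \<and> measure (F (opp k)) {0<..<c} = 0"
proof -
  define l where "l = opp k"
  have l: "l \<in> {1,2}" unfolding l_def using oppin[OF k] .
  have olk: "opp l = k" unfolding l_def using opp_opp[OF k] .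
  have vk: "v k > 0" "v l > 0" using vals k l by auto
  have Bk: "B k \<ge> 0" "B l \<ge> 0" using budgets k l by auto
  have cBk: "c \<le> B k"
  proof (rule ccontr)
    assume "\<not> c \<le> B k"
    then have "measure (F k) {0..B k} \<le> measure (F k) {..<c}" by (intro mmono[OF k]) auto
    moreover have "measure (F k) {0..B k} = 1" using ms[OF k] unfolding mixed_strategy_def by blast
    ultimately show False using c0 by simp
  qed
  have ul: "u l \<ge> 0"
  proof -
    have "Ucl B v l (F k) 0 \<ge> v l * measure (F k) {..<0} - 0" using Ucl_ge[OF k l, of 0] by simp
    moreover have "v l * measure (F k) {..<0} \<ge> 0" using vk mnn by simp
    moreover have "Ucl B v l (F (opp l)) 0 \<le> u l" using eqA[OF l] Bk by simp
    ultimately show ?thesis using olk by simp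
  qed
  have X3: "measure (F l) {0<..<c} = 0"
  proof (rule ccontr)
    assume "measure (F l) {0<..<c} \<noteq> 0"
    then have "measure (F l) {0<..<c} > 0" using mnn[of l "{0<..<c}"] by linarith
    then obtain x where x: "x \<in> {0<..<c} \<inter> {0..B l}" and ge: "Ucl B v l (F (opp l)) x \<ge> u l"
      using eqB[OF l, of "{0<..<c}"] by blast
    have "measure (F k) {..x} \<le> measure (F k) {..<c}" using x by (intro mmono[OF k]) auto
    then have "measure (F k) {..x} = 0" using c0 mnn[of k "{..x}"] by linarith
    then have "Ucl B v l (F k) x \<le> - x" using Ucl_le[OF k l, of x] by simp
    then show False using ge ul x olk by simp
  qed
  have pl: "measure (F l) {..<c/2} = measure (F l) {..<c}"
  proof -
    have "measure (F l) {..<c} = measure (F l) {..<c/2} + measure (F l) {c/2..<c}"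
      using lt_split[OF l, of "c/2" c] cpos by simp
    moreover have "measure (F l) {c/2..<c} \<le> measure (F l) {0<..<c}"
      using cpos by (intro mmono[OF l]) auto
    ultimately show ?thesis using X3 mnn[of l "{c/2..<c}"] by linarith
  qed
  have X4: "measure (F l) {c} > 0"
  proof (rule ccontr)
    assume "\<not> ?thesis"
    then have Qc: "measure (F l) {c} = 0" using mnn[of l "{c}"] by linarith
    define p where "p = measure (F l) {..<c}"
    define \<eta> where "\<eta> = c / (4 * v k)"
    have eta: "\<eta> > 0" unfolding \<eta>_def using cpos vk by simp
    obtain d where d: "d > 0" and dQ: "measure (F l) {c..c+d} < measure (F l) {c} + \<eta>"
      using right_cont[OF ms[OF l] eta] by blast
    have PS: "measure (F k) {c..<c+d} > 0"
    proof -
      have "measure (F k) {..<c+d} = measure (F k) {..<c} + measure (F k) {c..<c+d}"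
        using lt_split[OF k, of c "c+d"] d by simp
      then show ?thesis using cp d c0 by auto
    qed
    obtain x where x: "x \<in> {c..<c+d} \<inter> {0..B k}" and ge: "Ucl B v k (F (opp k)) x \<ge> u k"
      using eqB[OF k PS] by blast
    have "{..x} \<subseteq> {..<c} \<union> {c..c+d}" using x by auto
    then have "measure (F l) {..x} \<le> measure (F l) ({..<c} \<union> {c..c+d})" by (intro mmono[OF l]) auto
    also have "\<dots> \<le> p + measure (F l) {c..c+d}" unfolding p_def by (intro msub[OF l]) auto
    finally have "measure (F l) {..x} < p + \<eta>" using dQ Qc by linarith
    then have "v k * measure (F l) {..x} < v k * (p + \<eta>)" using vk by simp
    also have "\<dots> = v k * p + c / 4" unfolding \<eta>_def using vk by (simp add: field_simps)
    finally have "Ucl B v k (F l) x < v k * p + c / 4 - x" using Ucl_le[OF l k, of x] by linarith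
    moreover have "x \<ge> c" using x by auto
    moreover have "u k \<ge> Ucl B v k (F l) (c/2)" using eqA[OF k, of "c/2"] cBk cpos l_def by simp
    moreover have "Ucl B v k (F l) (c/2) \<ge> v k * p - c/2" using Ucl_ge[OF l k, of "c/2"] pl p_def by simp
    ultimately show False using ge l_def cpos by simp
  qed
  have cBl: "c \<le> B l"
  proof (rule ccontr)
    assume "\<not> c \<le> B l"
    then have "measure (F l) {c} = 0" by (intro ms_outside[OF ms[OF l]]) auto
    then show False using X4 by simp
  qed
  have X5: "measure (F k) {c} > 0"
  proof (rule ccontr)
    assume "\<not> ?thesis"
    then have Pc: "measure (F k) {c} = 0" using mnn[of k "{c}"] by linarith
    obtain x where x: "x \<in> {c} \<inter> {0..B l}" and ge: "Ucl B v l (F (opp l)) x \<ge> u l"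
      using eqB[OF l, of "{c}"] X4 by blast
    have "Ucl B v l (F k) c \<le> v l * measure (F k) {..c} - c" using Ucl_le[OF k l] .
    moreover have "measure (F k) {..c} = 0" using atMost_split[OF k, of c] c0 Pc by simp
    ultimately show False using x ge ul olk cpos by simp
  qed
  have both: "measure (F (opp m)) {c} > 0 \<and> Ucl B v m (F (opp m)) c \<ge> u m \<and> c \<le> B m
      \<and> measure (F (opp m)) {..<c/2} = measure (F (opp m)) {..<c}" if m: "m \<in> {k, l}" for m
  proof (cases "m = k")
    case True
    obtain x where "x \<in> {c} \<inter> {0..B k}" "Ucl B v k (F (opp k)) x \<ge> u k"
      using eqB[OF k, of "{c}"] X5 by blast
    then show ?thesis using True X4 cBk pl l_def by auto
  next
    case False
    then have mm: "m = l" using m by auto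
    obtain x where "x \<in> {c} \<inter> {0..B l}" "Ucl B v l (F (opp l)) x \<ge> u l"
      using eqB[OF l, of "{c}"] X4 by blast
    moreover have "measure (F k) {..<c/2} = 0"
      using mmono[OF k, of "{..<c/2}" "{..<c}"] c0 mnn[of k "{..<c/2}"] cpos by auto
    ultimately show ?thesis using mm X5 cBl olk c0 by auto
  qed
  have kl: "{k, l} = {1,2}" using k l_def by (auto simp: opp_def)
  have clA: "win_prob B v m c c = 1" if m: "m \<in> {1,2}" and cm: "c < B m" for m
  proof (rule ccontr)
    assume t1: "win_prob B v m c c \<noteq> 1"
    define n where "n = opp m"
    have n: "n \<in> {1,2}" unfolding n_def using oppin[OF m] .
    have bm: "measure (F n) {c} > 0" "Ucl B v m (F n) c \<ge> u m"
      using both[of m] m kl unfolding n_def by auto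
    define t where "t = win_prob B v m c c"
    have tle: "t \<le> 1/2" using wp_vals[of B v m c] t1 unfolding t_def by auto
    define g where "g = v m * (1 - t) * measure (F n) {c}"
    have vm: "v m > 0" using vals m by auto
    have gpos: "g > 0" unfolding g_def using vm tle bm(1) by simp
    define \<epsilon> where "\<epsilon> = min (g/2) (B m - c)"
    have eps: "\<epsilon> > 0" "\<epsilon> \<le> g/2" "c + \<epsilon> \<le> B m"
      unfolding \<epsilon>_def using gpos cm by (auto simp del: min_less_iff_conj simp add: min_def)
    have "Ucl B v m (F n) (c + \<epsilon>) \<le> u m" using eqA[OF m, of "c+\<epsilon>"] eps cpos n_def by simp
    moreover have "Ucl B v m (F n) (c + \<epsilon>) \<ge> v m * measure (F n) {..<c+\<epsilon>} - (c + \<epsilon>)"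
      using Ucl_ge[OF n m] .
    moreover have "measure (F n) {..c} \<le> measure (F n) {..<c+\<epsilon>}" using eps by (intro mmono[OF n]) auto
    moreover have "Ucl B v m (F n) c = v m * (measure (F n) {..<c} + t * measure (F n) {c}) - c"
      unfolding Ucl_def t_def ..
    moreover have "v m * measure (F n) {..c} = v m * (measure (F n) {..<c} + t * measure (F n) {c}) + g"
      unfolding g_def atMost_split[OF n] by (simp add: algebra_simps)
    moreover have "v m * measure (F n) {..c} \<le> v m * measure (F n) {..<c+\<epsilon>}"
      using calculation(3) vm by simp
    ultimately show False using bm(2) eps by linarith
  qed
  have clB: "win_prob B v m c c \<noteq> 0" if m: "m \<in> {1,2}" for m
  proof
    assume t0: "win_prob B v m c c = 0"
    define n where "n = opp m"
    have n: "n \<in> {1,2}" unfolding n_def using oppin[OF m] .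
    have bm: "Ucl B v m (F n) c \<ge> u m" "c \<le> B m" "measure (F n) {..<c/2} = measure (F n) {..<c}"
      using both[of m] m kl unfolding n_def by auto
    have "Ucl B v m (F n) c = v m * measure (F n) {..<c} - c" unfolding Ucl_def t0 by simp
    moreover have "Ucl B v m (F n) (c/2) \<le> u m" using eqA[OF m, of "c/2"] bm(2) cpos n_def by simp
    moreover have "Ucl B v m (F n) (c/2) \<ge> v m * measure (F n) {..<c/2} - c/2" using Ucl_ge[OF n m] .
    ultimately show False using bm cpos by simp
  qed
  have half: "win_prob B v m c c \<noteq> 1" if m: "m \<in> {1,2}" for m
  proof
    assume "win_prob B v m c c = 1"
    then have "win_prob B v (opp m) c c = 0" using wp_one[OF m] by blast
    then show False using clB[OF oppin[OF m]] by blast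
  qed
  have "\<not> c < B 1" "\<not> c < B 2" using clA half by auto
  moreover have "c \<le> B 1" "c \<le> B 2" using both kl by auto
  ultimately show ?thesis using X3 l_def by simp
qed

end

lemma opp_Suc0[simp]: "opp (Suc 0) = 2" by (simp add: opp_def)

context eqm
begin

lemma le_one: "k \<in> {1,2} \<Longrightarrow> measure (F k) {..B k} = 1"
proof -
  assume k: "k \<in> {1,2}"
  have "measure (F k) {..B k} = measure (F k) ({..B k} \<inter> {0..B k})" by (rule ms_restrict[OF ms[OF k]]) simp
  also have "{..B k} \<inter> {0..B k} = {0..B k}" by auto
  finally have e: "measure (F k) {..B k} = measure (F k) {0..B k}" .
  have "measure (F k) {0..B k} = 1" using ms[OF k] unfolding mixed_strategy_def by blast
  then show ?thesis using e by simp
qed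

lemma lemZ:
  assumes b1: "B 1 = b0" and b2: "B 2 = b0" and b0: "b0 > 0" and v1: "v 1 \<ge> 2*b0" and v2: "v 2 \<ge> 2*b0"
    and z: "\<forall>k\<in>{1,2}. \<forall>e>0. measure (F k) {..<e} > 0"
  shows False
proof -
  have mins: "min (min (B 1) (B 2)) (min (v 1) (v 2)) = b0" using b1 b2 b0 v1 v2 by simp
  have mk: "min (B k) (v k) = b0" if "k \<in> {1,2}" for k using that b1 b2 b0 v1 v2 by auto
  have step: "u k > 0 \<and> measure (F (opp k)) {0} > 0" if k: "k \<in> {1,2}" for k
  proof -
    define l where "l = opp k"
    have l: "l \<in> {1,2}" unfolding l_def using oppin[OF k] .
    have Bk: "B k = b0" "B l = b0" using b1 b2 k l by auto
    have vk: "v k \<ge> 2 * b0" using v1 v2 k by auto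
    have one: "measure (F l) {..<b0} + measure (F l) {b0} = 1"
      using le_one[OF l] atMost_split[OF l, of b0] Bk by simp
    have qpos: "measure (F l) {..<b0} > 0" using z l b0 by auto
    have wp: "win_prob B v k b0 b0 = 1/2"
      by (rule wp_half) (use mk[OF k] mk[OF l] l_def in simp)
    have U: "Ucl B v k (F l) b0 = v k * (measure (F l) {..<b0} + 1/2 * measure (F l) {b0}) - b0"
      unfolding Ucl_def wp ..
    have s: "measure (F l) {..<b0} + 1/2 * measure (F l) {b0} > 1/2" using one qpos by linarith
    have "v k * (measure (F l) {..<b0} + 1/2 * measure (F l) {b0}) > v k * (1/2)"
      using s vk b0 by (intro mult_strict_left_mono) auto
    then have Upos: "Ucl B v k (F l) b0 > 0" using U vk by linarith
    have uk: "u k > 0" using eqA[OF k, of b0] Bk b0 Upos l_def by simp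
    have Q0: "measure (F l) {0} > 0"
    proof (rule ccontr)
      assume "\<not> ?thesis"
      then have Qc: "measure (F l) {0} = 0" using mnn[of l "{0}"] by linarith
      define \<eta> where "\<eta> = u k / v k"
      have vkp: "v k > 0" using vals k by auto
      have eta: "\<eta> > 0" unfolding \<eta>_def using uk vkp by simp
      obtain d where d: "d > 0" and dQ: "measure (F l) {0..0+d} < measure (F l) {0} + \<eta>"
        using right_cont[OF ms[OF l] eta] by blast
      define d' where "d' = min d b0"
      have d': "d' > 0" "d' \<le> d" unfolding d'_def using d b0 by auto
      have "measure (F k) {..<d'} > 0" using z k d' by auto
      then obtain x where x: "x \<in> {..<d'} \<inter> {0..B k}" and ge: "Ucl B v k (F (opp k)) x \<ge> u k"
        using eqB[OF k] by blast
      have "measure (F l) {..x} \<le> measure (F l) ({..<0} \<union> {0..0+d})"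
        using x d' by (intro mmono[OF l]) auto
      also have "\<dots> \<le> measure (F l) {..<0} + measure (F l) {0..0+d}" by (intro msub[OF l]) auto
      also have "measure (F l) {..<0} = 0" by (rule ms_outside[OF ms[OF l]]) auto
      finally have "measure (F l) {..x} < \<eta>" using dQ Qc by linarith
      then have "v k * measure (F l) {..x} < v k * \<eta>" using vkp by simp
      also have "v k * \<eta> = u k" unfolding \<eta>_def using vkp by simp
      moreover have "x \<ge> 0" using x by auto
      ultimately have "Ucl B v k (F l) x < u k" using Ucl_le[OF l k, of x] by linarith
      then show False using ge l_def by simp
    qed
    show ?thesis using uk Q0 l_def by simp
  qed
  have P0: "measure (F 1) {0} > 0" using step[of 2] by simp
  have Q0: "measure (F 2) {0} > 0" using step[of 1] by simp
  have k1: "(1::nat) \<in> {1,2}" "(2::nat) \<in> {1,2}" by auto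
  obtain x where "x \<in> {0} \<inter> {0..B 1}" and ge: "Ucl B v 1 (F (opp 1)) x \<ge> u 1"
    using eqB[OF k1(1) P0] by blast
  then have ge0: "Ucl B v 1 (F 2) 0 \<ge> u 1" by simp
  have wp: "win_prob B v 1 0 0 = 1/2" by (rule wp_half) (use mins b0 in simp)
  have m0: "measure (F 2) {..<0} = 0" by (rule ms_outside[OF ms[OF k1(2)]]) auto
  have U0: "Ucl B v 1 (F 2) 0 = v 1 * measure (F 2) {0} / 2" unfolding Ucl_def wp m0 by simp
  define \<epsilon> where "\<epsilon> = min b0 (v 1 * measure (F 2) {0} / 4)"
  have v1p: "v 1 > 0" using vals by auto
  have g: "v 1 * measure (F 2) {0} > 0" using v1p Q0 by simp
  have eps: "\<epsilon> > 0" "\<epsilon> \<le> b0" "\<epsilon> \<le> v 1 * measure (F 2) {0} / 4"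
    unfolding \<epsilon>_def using b0 g by (auto simp del: min_less_iff_conj simp add: min_def)
  have "Ucl B v 1 (F 2) \<epsilon> \<le> u 1" using eqA[OF k1(1), of \<epsilon>] eps b1 by simp
  moreover have "Ucl B v 1 (F 2) \<epsilon> \<ge> v 1 * measure (F 2) {..<\<epsilon>} - \<epsilon>" using Ucl_ge[OF k1(2) k1(1)] .
  moreover have "measure (F 2) {0} \<le> measure (F 2) {..<\<epsilon>}" using eps by (intro mmono[OF k1(2)]) auto
  then have "v 1 * measure (F 2) {0} \<le> v 1 * measure (F 2) {..<\<epsilon>}" using v1p by simp
  ultimately show False using ge0 U0 eps g by linarith
qed

lemma lemOther:
  assumes b1: "B 1 = b0" and b2: "B 2 = b0" and b0: "b0 > 0" and v1: "v 1 > 2*b0" and v2: "v 2 > 2*b0"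
    and k: "k \<in> {1,2}" and Pb: "measure (F k) {..<b0} = 0"
  shows "measure (F (opp k)) {b0} = 1"
proof -
  define l where "l = opp k"
  have l: "l \<in> {1,2}" unfolding l_def using oppin[OF k] .
  have olk: "opp l = k" unfolding l_def using opp_opp[OF k] .
  have Bk: "B k = b0" "B l = b0" using b1 b2 k l by auto
  have vl: "v l > 2 * b0" using v1 v2 l by auto
  have Pb1: "measure (F k) {b0} = 1" using le_one[OF k] atMost_split[OF k, of b0] Bk Pb by simp
  have mk: "min (B m) (v m) = b0" if "m \<in> {1,2}" for m using that b1 b2 b0 v1 v2 by auto
  have wp: "win_prob B v l b0 b0 = 1/2"
    by (rule wp_half) (use mk[OF k] mk[OF l] olk in simp)
  have "Ucl B v l (F k) b0 = v l / 2 - b0" unfolding Ucl_def wp Pb Pb1 by simp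
  then have ul: "u l > 0" using eqA[OF l, of b0] Bk b0 vl olk by simp
  have Q0: "measure (F l) {..<b0} = 0"
  proof (rule ccontr)
    assume "measure (F l) {..<b0} \<noteq> 0"
    then have "measure (F l) {..<b0} > 0" using mnn[of l "{..<b0}"] by linarith
    then obtain x where x: "x \<in> {..<b0} \<inter> {0..B l}" and ge: "Ucl B v l (F (opp l)) x \<ge> u l"
      using eqB[OF l] by blast
    have "measure (F k) {..x} \<le> measure (F k) {..<b0}" using x by (intro mmono[OF k]) auto
    then have "measure (F k) {..x} = 0" using Pb mnn[of k "{..x}"] by linarith
    then have "Ucl B v l (F k) x \<le> - x" using Ucl_le[OF k l, of x] by simp
    then show False using ge ul x olk by simp
  qed
  show ?thesis using le_one[OF l] atMost_split[OF l, of b0] Bk Q0 l_def by simp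
qed

lemma lemC2:
  assumes b1: "B 1 = b0" and b2: "B 2 = b0" and b0: "b0 > 0"
    and i: "i \<in> {1,2}" and vi: "v i = 2*b0" and vj: "v (opp i) \<ge> 2*b0"
    and Pb: "measure (F i) {..<b0} = 0" and Qmid: "measure (F (opp i)) {0<..<b0} = 0"
    and z: "\<forall>e>0. measure (F (opp i)) {..<e} > 0"
  shows False
proof -
  define j where "j = opp i"
  have j: "j \<in> {1,2}" unfolding j_def using oppin[OF i] .
  have oji: "opp j = i" unfolding j_def using opp_opp[OF i] .
  have Bk: "B i = b0" "B j = b0" using b1 b2 i j by auto
  have Pb1: "measure (F i) {b0} = 1" using le_one[OF i] atMost_split[OF i, of b0] Bk Pb by simp
  define q where "q = measure (F j) {..<b0}"
  have Qb: "measure (F j) {b0} = 1 - q" unfolding q_def using le_one[OF j] atMost_split[OF j, of b0] Bk by simp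
  have qpos: "q > 0" unfolding q_def using z b0 j_def by auto
  have mi: "min (B i) (v i) = b0" using Bk vi b0 by simp
  have mj: "min (B (opp i)) (v (opp i)) = b0" using Bk vj b0 j_def by simp
  have wp: "win_prob B v i b0 b0 = 1/2"
    by (rule wp_half, rule disjI2) (simp only: mi mj)
  obtain x where "x \<in> {b0} \<inter> {0..B i}" and ge: "Ucl B v i (F (opp i)) x \<ge> u i"
    using eqB[OF i, of "{b0}"] Pb1 by auto
  then have ge0: "Ucl B v i (F j) b0 \<ge> u i" using j_def by simp
  have "Ucl B v i (F j) b0 = 2 * b0 * (q + 1/2 * (1 - q)) - b0" unfolding Ucl_def wp vi Qb q_def ..
  also have "\<dots> = b0 * q" by (simp add: field_simps)
  finally have U: "Ucl B v i (F j) b0 = b0 * q" .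
  define \<epsilon> where "\<epsilon> = b0 * q / 2"
  have q1: "q \<le> 1" unfolding q_def using mle1[OF j] .
  have bq: "b0 * q > 0" using b0 qpos by simp
  have "b0 * q \<le> b0 * 1" using q1 b0 by (intro mult_left_mono) auto
  then have eps: "\<epsilon> > 0" "\<epsilon> \<le> b0" unfolding \<epsilon>_def using bq by linarith+
  have "q = measure (F j) {..<\<epsilon>} + measure (F j) {\<epsilon>..<b0}" unfolding q_def using lt_split[OF j, of \<epsilon> b0] eps by simp
  moreover have "measure (F j) {\<epsilon>..<b0} \<le> measure (F j) {0<..<b0}" using eps by (intro mmono[OF j]) auto
  ultimately have qe: "measure (F j) {..<\<epsilon>} = q" using Qmid[folded j_def] mnn[of j "{\<epsilon>..<b0}"] by linarith
  have "Ucl B v i (F j) \<epsilon> \<le> u i" using eqA[OF i, of \<epsilon>] eps Bk j_def by simp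
  moreover have "Ucl B v i (F j) \<epsilon> \<ge> v i * measure (F j) {..<\<epsilon>} - \<epsilon>" using Ucl_ge[OF j i] .
  moreover have "v i * measure (F j) {..<\<epsilon>} = 2 * (b0 * q)" using vi qe by simp
  ultimately show False using ge0 U bq \<epsilon>_def by linarith
qed

end

context eqm
begin

lemma cex: "k \<in> {1,2} \<Longrightarrow> \<exists>c. c \<in> {0..B k} \<and> measure (F k) {..<c} = 0 \<and>
   (\<forall>e>0. measure (F k) {..<c+e} > 0) \<and> inf_supp (F k) = c"
  using inf_exists[OF ms] inf_supp_eq[OF ms] by metis

lemma pm_of: "k \<in> {1,2} \<Longrightarrow> measure (F k) {..<B k} = 0 \<Longrightarrow> measure (F k) {B k} = 1"
proof -
  assume k: "k \<in> {1,2}" and z: "measure (F k) {..<B k} = 0"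
  have "measure (F k) {..B k} = measure (F k) {..<B k} + measure (F k) {B k}" using atMost_split[OF k] .
  then show ?thesis using le_one[OF k] z by simp
qed

lemma pure: "k \<in> {1,2} \<Longrightarrow> measure (F k) {b} = 1 \<Longrightarrow> inf_supp (F k) = sup_supp (F k)"
  using point_mass[OF ms] by metis

end

theorem lemma8:
  fixes B v :: "nat \<Rightarrow> real" and F :: "nat \<Rightarrow> real measure"
  assumes budgets: "\<forall>i\<in>{1,2}. B i \<ge> 0"
    and vals: "\<forall>i\<in>{1,2}. v i > 0"
    and eq: "nash B v F"
  shows "(B 1 = B 2 \<and> B 2 < min (v 1) (v 2) / 2 \<longrightarrow>
            (\<forall>i\<in>{1,2}. inf_supp (F i) = sup_supp (F i)))
       \<and> (B 1 = B 2 \<and> B 1 = min (v 1) (v 2) / 2 \<longrightarrow>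
            (\<forall>i\<in>{1,2}. v i = min (v 1) (v 2) \<longrightarrow>
               ((inf_supp (F i) = sup_supp (F i) \<and>
                 inf_supp (F (opp i)) = sup_supp (F (opp i)))
              \<or> (inf_supp (F i) = 0 \<and>
                 inf_supp (F (opp i)) = sup_supp (F (opp i))))))
       \<and> (B 1 \<noteq> B 2 \<longrightarrow> inf_supp (F 1) = 0 \<and> inf_supp (F 2) = 0)"
proof -
  interpret E: eqm B v F using assms by (rule eqm.intro)
  have k1: "(1::nat) \<in> {1,2}" and k2: "(2::nat) \<in> {1,2}" by auto
  have posX: "B 1 = c \<and> B 2 = c \<and> measure (F (opp k)) {0<..<c} = 0 \<and> measure (F k) {B k} = 1"
    if k: "k \<in> {1,2}" and c: "c \<in> {0..B k}" "measure (F k) {..<c} = 0"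
      "\<forall>e>0. measure (F k) {..<c+e} > 0" and cp: "c > 0" for k c
  proof -
    have X: "B 1 = c \<and> B 2 = c \<and> measure (F (opp k)) {0<..<c} = 0"
      using E.lemX[OF k cp c(2) c(3)] .
    then have "B k = c" using k by auto
    then show ?thesis using X E.pm_of[OF k] c(2) by simp
  qed
  have part3: "B 1 \<noteq> B 2 \<longrightarrow> inf_supp (F 1) = 0 \<and> inf_supp (F 2) = 0"
  proof
    assume ne: "B 1 \<noteq> B 2"
    have "inf_supp (F k) = 0" if k: "k \<in> {1,2}" for k
    proof -
      obtain c where c: "c \<in> {0..B k}" "measure (F k) {..<c} = 0"
        "\<forall>e>0. measure (F k) {..<c+e} > 0" "inf_supp (F k) = c"
        using E.cex[OF k] by blast
      have "\<not> c > 0" using posX[OF k c(1-3)] ne by auto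
      then show ?thesis using c by auto
    qed
    then show "inf_supp (F 1) = 0 \<and> inf_supp (F 2) = 0" by simp
  qed
  have part1: "B 1 = B 2 \<and> B 2 < min (v 1) (v 2) / 2 \<longrightarrow>
            (\<forall>i\<in>{1,2}. inf_supp (F i) = sup_supp (F i))"
  proof (intro impI)
    assume a: "B 1 = B 2 \<and> B 2 < min (v 1) (v 2) / 2"
    define b0 where "b0 = B 1"
    have b12: "B 1 = b0" "B 2 = b0" using a b0_def by auto
    have vv: "v 1 > 2 * b0" "v 2 > 2 * b0" using a b12 by auto
    show "\<forall>i\<in>{1,2}. inf_supp (F i) = sup_supp (F i)"
    proof (cases "b0 = 0")
      case True
      have "measure (F k) {0} = 1" if k: "k \<in> {1,2}" for k
      proof -
        have "B k = 0" using k b12 True by auto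
        then show ?thesis using E.ms[OF k] unfolding mixed_strategy_def by simp
      qed
      then show ?thesis using E.pure by blast
    next
      case False
      then have b0: "b0 > 0" using budgets b12 by force
      obtain c1 where c1: "c1 \<in> {0..B 1}" "measure (F 1) {..<c1} = 0"
        "\<forall>e>0. measure (F 1) {..<c1+e} > 0" "inf_supp (F 1) = c1"
        using E.cex[OF k1] by blast
      obtain c2 where c2: "c2 \<in> {0..B 2}" "measure (F 2) {..<c2} = 0"
        "\<forall>e>0. measure (F 2) {..<c2+e} > 0" "inf_supp (F 2) = c2"
        using E.cex[OF k2] by blast
      have "\<not> (c1 = 0 \<and> c2 = 0)"
      proof
        assume "c1 = 0 \<and> c2 = 0"
        then have "\<forall>k\<in>{1,2}. \<forall>e>0. measure (F k) {..<e} > 0" using c1(3) c2(3) by auto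
        then show False using E.lemZ[OF b12 b0] vv by simp
      qed
      then have "c1 \<noteq> 0 \<or> c2 \<noteq> 0" by simp
      then have "\<exists>k\<in>{1,2}. measure (F k) {..<b0} = 0"
      proof
        assume "c1 \<noteq> 0"
        then have "c1 > 0" using c1(1) by auto
        then have "B 1 = c1" using posX[OF k1 c1(1-3)] by blast
        then show ?thesis using c1(2) b12 by auto
      next
        assume "c2 \<noteq> 0"
        then have "c2 > 0" using c2(1) by auto
        then have "B 2 = c2" using posX[OF k2 c2(1-3)] by blast
        then show ?thesis using c2(2) b12 by auto
      qed
      then obtain k where k: "k \<in> {1,2}" and Pk: "measure (F k) {..<b0} = 0" by blast
      have Pk1: "measure (F k) {b0} = 1" using E.pm_of[OF k] Pk b12 k by auto
      have Pl1: "measure (F (opp k)) {b0} = 1" using E.lemOther[OF b12 b0 vv k Pk] .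
      have "opp k \<in> {1,2}" using E.oppin[OF k] .
      have eqs: "{k, opp k} = {1,2}" using k by (auto simp: opp_def)
      have "\<forall>i\<in>{k, opp k}. inf_supp (F i) = sup_supp (F i)"
        using E.pure[OF k Pk1] E.pure[OF E.oppin[OF k] Pl1] by simp
      then show ?thesis unfolding eqs .
    qed
  qed
  have part2: "B 1 = B 2 \<and> B 1 = min (v 1) (v 2) / 2 \<longrightarrow>
            (\<forall>i\<in>{1,2}. v i = min (v 1) (v 2) \<longrightarrow>
               ((inf_supp (F i) = sup_supp (F i) \<and>
                 inf_supp (F (opp i)) = sup_supp (F (opp i)))
              \<or> (inf_supp (F i) = 0 \<and>
                 inf_supp (F (opp i)) = sup_supp (F (opp i)))))"
  proof (intro impI ballI)
    fix i :: nat
    assume a: "B 1 = B 2 \<and> B 1 = min (v 1) (v 2) / 2" and i: "i \<in> {1,2}" and vi: "v i = min (v 1) (v 2)"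
    define b0 where "b0 = B 1"
    define j where "j = opp i"
    have j: "j \<in> {1,2}" unfolding j_def using E.oppin[OF i] .
    have b12: "B 1 = b0" "B 2 = b0" using a b0_def by auto
    have b0: "b0 > 0" using a b12 vals by auto
    have vi2: "v i = 2 * b0" using vi a b12 by simp
    have vj2: "v (opp i) \<ge> 2 * b0" using a b12 i by (auto simp: opp_def)
    have Bij: "B i = b0" "B j = b0" using b12 i j by auto
    have ij: "{i, j} = {1,2}" using i j_def by (auto simp: opp_def)
    obtain ci where ci: "ci \<in> {0..B i}" "measure (F i) {..<ci} = 0"
        "\<forall>e>0. measure (F i) {..<ci+e} > 0" "inf_supp (F i) = ci"
        using E.cex[OF i] by blast
    obtain cj where cj: "cj \<in> {0..B j}" "measure (F j) {..<cj} = 0"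
        "\<forall>e>0. measure (F j) {..<cj+e} > 0" "inf_supp (F j) = cj"
        using E.cex[OF j] by blast
    show "(inf_supp (F i) = sup_supp (F i) \<and> inf_supp (F (opp i)) = sup_supp (F (opp i)))
       \<or> (inf_supp (F i) = 0 \<and> inf_supp (F (opp i)) = sup_supp (F (opp i)))"
    proof (cases "cj > 0")
      case True
      have "measure (F j) {B j} = 1" using posX[OF j cj(1-3) True] by blast
      then have pj: "inf_supp (F j) = sup_supp (F j)" using E.pure[OF j] by blast
      show ?thesis
      proof (cases "ci > 0")
        case True
        have "measure (F i) {B i} = 1" using posX[OF i ci(1-3) True] by blast
        then have "inf_supp (F i) = sup_supp (F i)" using E.pure[OF i] by blast
        then show ?thesis using pj j_def by simp
      next
        case False
        then have "ci = 0" using ci(1) by auto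
        then show ?thesis using pj j_def ci(4) by simp
      qed
    next
      case False
      then have cj0: "cj = 0" using cj(1) by auto
      show ?thesis
      proof (cases "ci > 0")
        case True
        have X: "B 1 = ci \<and> B 2 = ci \<and> measure (F (opp i)) {0<..<ci} = 0"
          using E.lemX[OF i True ci(2) ci(3)] .
        then have "ci = b0" using b12 by simp
        then have False
          using E.lemC2[OF b12 b0 i vi2 vj2] ci(2) X cj(3) cj0 j_def by simp
        then show ?thesis ..
      next
        case False
        then have ci0: "ci = 0" using ci(1) by auto
        have "\<forall>k\<in>{i,j}. \<forall>e>0. measure (F k) {..<e} > 0" using ci(3) cj(3) ci0 cj0 by auto
        then have "\<forall>k\<in>{1,2}. \<forall>e>0. measure (F k) {..<e} > 0" using ij by simp
        then have False using E.lemZ[OF b12 b0] vi2 vj2 i j_def by (auto simp: opp_def)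
        then show ?thesis ..
      qed
    qed
  qed
  show ?thesis using part1 part2 part3 by blast
qed

end
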